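(* The numbers $\operatorname{op}_{n,n-1}(123)$ satisfy $\operatorname{op}_{2,1}(123)=1$ and, for all $n>2$, $$\operatorname{op}_{n,n-1}(123) = \frac{(4n-6)(n-1)^2}{(n-2)^2(n+1)}\operatorname{op}_{n-1,n-2}(123).$$
   Context: An ordered set partition of $[n]$ into $k$ blocks is a sequence $B_1/B_2/\cdots/B_k$ of nonempty, pairwise disjoint subsets of $[n]$ whose union is $[n]$; the order of the blocks matters, but not the order of elements within a block. For a permutation $\rho=\rho_1\cdots\rho_m\in\mathcal{S}_m$, an ordered partition $B_1/\cdots/B_k$ contains $\rho$ if there are block indices $i_1<i_2<\cdots<i_m$ and elements $b_j\in B_{i_j}$ such that $b_1\cdots b_m$ is order-isomorphic to $\rho$ (i.e. $b_a<b_c$ iff $\rho_a<\rho_c$); otherwise it avoids $\rho$. $\operatorname{op}_{n,k}(\rho)$ denotes the number of ordered partitions of $[n]$ into $k$ blocks that avoid $\rho$. *)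

theory Defs
  imports Complex_Main
begin

definition ordered_set_partition :: "nat \<Rightarrow> nat \<Rightarrow> nat set list \<Rightarrow> bool" where
  "ordered_set_partition n k Bs \<longleftrightarrow>
     length Bs = k \<and>
     (\<forall>i<k. Bs ! i \<noteq> {}) \<and>
     (\<forall>i<k. \<forall>j<k. i \<noteq> j \<longrightarrow> Bs ! i \<inter> Bs ! j = {}) \<and>
     (\<Union>i<k. Bs ! i) = {1..n}"

definition order_iso :: "nat list \<Rightarrow> nat list \<Rightarrow> bool" where
  "order_iso w rho \<longleftrightarrow> length w = length rho \<and>
     (\<forall>a<length rho. \<forall>c<length rho. (w ! a < w ! c) \<longleftrightarrow> (rho ! a < rho ! c))"

text \<open>Bs contains rho: block indices i_1<...<i_m and b_j in B_{i_j} with b_1..b_m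
  order-isomorphic to rho. Indices are 0-based here.\<close>
definition osp_contains :: "nat set list \<Rightarrow> nat list \<Rightarrow> bool" where
  "osp_contains Bs rho \<longleftrightarrow>
     (\<exists>idx b. length idx = length rho \<and> length b = length rho \<and>
        sorted_wrt (<) idx \<and> (\<forall>j<length rho. idx ! j < length Bs \<and> b ! j \<in> Bs ! (idx ! j)) \<and>
        order_iso b rho)"

definition op_count :: "nat \<Rightarrow> nat \<Rightarrow> nat list \<Rightarrow> nat" where
  "op_count n k rho = card {Bs. ordered_set_partition n k Bs \<and> \<not> osp_contains Bs rho}"

end

theory Submission
  imports Defs
begin


definition av :: "nat list \<Rightarrow> bool" where
  "av w \<longleftrightarrow> \<not>(\<exists>a b c. a < b \<and> b < c \<and> c < length w \<and> w!a < w!b \<and> w!b < w!c)"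

fun lab :: "nat list \<Rightarrow> nat" where
  "lab [] = 0"
| "lab [x] = 1"
| "lab (x#y#r) = (if y < x then Suc (lab (y#r)) else 1)"

lemma lab_le: "lab w \<le> length w"
  by (induction w rule: lab.induct) auto

lemma lab_pos: "w \<noteq> [] \<Longrightarrow> 0 < lab w"
  by (induction w rule: lab.induct) auto

lemma lab_Cons_nz[simp]: "lab (x#r) \<noteq> 0"
  using lab_pos[of "x#r"] by simp

lemma lab_dec: "i < j \<Longrightarrow> j < lab w \<Longrightarrow> w!j < w!i"
proof (induction w arbitrary: i j rule: lab.induct)
  case (3 x y r)
  show ?case
  proof (cases "y < x")
    case True
    then have L: "lab (x#y#r) = Suc (lab (y#r))" by simp
    show ?thesis
    proof (cases i)
      case 0
      then obtain j' where j: "j = Suc j'" using 3 by (cases j) auto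
      show ?thesis
      proof (cases j')
        case 0 then show ?thesis using j \<open>i=0\<close> True by simp
      next
        case (Suc j'')
        have "(y#r)!j' < (y#r)!0" using "3.IH"[OF True, of 0 j'] Suc 3(3) L j by simp
        then show ?thesis using j \<open>i=0\<close> Suc True by simp
      qed
    next
      case (Suc i')
      then obtain j' where j: "j = Suc j'" using 3 by (cases j) auto
      have "(y#r)!j' < (y#r)!i'" using "3.IH"[OF True, of i' j'] Suc j 3(2,3) L by simp
      then show ?thesis using Suc j by simp
    qed
  next
    case False then show ?thesis using 3 by simp
  qed
qed auto

lemma lab_stop: "lab w < length w \<Longrightarrow> \<not> w!lab w < w!(lab w - 1)"
  by (induction w rule: lab.induct) (auto simp: nth_Cons lab_pos split: nat.splits)

lemma lab_eqI: "0 < t \<Longrightarrow> t \<le> length w \<Longrightarrow> (\<And>i. Suc i < t \<Longrightarrow> w!(Suc i) < w!i)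
   \<Longrightarrow> (t < length w \<Longrightarrow> \<not> w!t < w!(t-1)) \<Longrightarrow> lab w = t"
proof (induction w arbitrary: t rule: lab.induct)
  case 1 then show ?case by simp
next
  case (2 x) then show ?case by simp
next
  case (3 x y r)
  show ?case
  proof (cases "t = 1")
    case True then show ?thesis using 3(5) by auto
  next
    case False
    then have t2: "t \<ge> 2" using 3(2) by simp
    have yx: "y < x" using 3(4)[of 0] t2 by simp
    have "lab (y#r) = t - 1"
    proof (rule 3(1)[OF yx])
      show "0 < t - 1" using t2 by simp
      show "t - 1 \<le> length (y#r)" using 3(3) by simp
      show "(y # r) ! Suc i < (y # r) ! i" if "Suc i < t - 1" for i
        using 3(4)[of "Suc i"] that by simp
      show "\<not> (y # r) ! (t - 1) < (y # r) ! (t - 1 - 1)" if "t - 1 < length (y # r)"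
        using 3(5) that t2 by (cases t) (auto simp: nth_Cons lab_pos split: nat.splits)
    qed
    then show ?thesis using yx t2 by simp
  qed
qed

definition ins :: "nat \<Rightarrow> nat \<Rightarrow> nat list \<Rightarrow> nat list" where
  "ins M s w = take s w @ M # drop s w"

definition asc :: "nat list \<Rightarrow> nat \<Rightarrow> bool" where
  "asc w q \<longleftrightarrow> Suc q < length w \<and> w!q < w!(Suc q)"

lemma length_ins[simp]: "s \<le> length w \<Longrightarrow> length (ins M s w) = Suc (length w)"
  by (simp add: ins_def)

lemma nth_ins: "s \<le> length w \<Longrightarrow> ins M s w ! i =
   (if i < s then w!i else if i = s then M else w!(i-1))"
  apply (auto simp: ins_def nth_append min_def nth_Cons split: nat.splits)
  subgoal by (rule arg_cong[where f="(!) w"]) arith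
  done

lemma av_ins:
  assumes lt: "\<forall>x\<in>set w. x < M" and s: "s \<le> length w" and d: "distinct w"
  shows "av (ins M s w) \<longleftrightarrow> av w \<and> s \<le> lab w"
proof
  assume A: "av (ins M s w)"
  have "av w"
    unfolding av_def
  proof
    assume "\<exists>a b c. a < b \<and> b < c \<and> c < length w \<and> w ! a < w ! b \<and> w ! b < w ! c"
    then obtain a b c where abc: "a < b" "b < c" "c < length w" "w ! a < w ! b" "w ! b < w ! c" by blast
    define f where "f = (\<lambda>i::nat. if i < s then i else Suc i)"
    have "f a < f b" "f b < f c" "f c < length (ins M s w)" using abc s by (auto simp: f_def)
    moreover have "ins M s w ! f i = w ! i" for i using s by (auto simp: f_def nth_ins)
    ultimately show False using A abc unfolding av_def by metis
  qed
  moreover have "s \<le> lab w"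
  proof (rule ccontr)
    assume "\<not> s \<le> lab w"
    then have l: "lab w < s" by simp
    then have l2: "lab w < length w" using s by simp
    then have "w \<noteq> []" by auto
    then have l0: "0 < lab w" by (rule lab_pos)
    have st: "\<not> w!lab w < w!(lab w - 1)" using lab_stop[OF l2] .
    have ne: "w!lab w \<noteq> w!(lab w - 1)" using d l2 l0 by (simp add: nth_eq_iff_index_eq)
    have "ins M s w ! (lab w - 1) = w!(lab w - 1)" using l l0 s by (simp add: nth_ins)
    moreover have "ins M s w ! (lab w) = w!(lab w)" using l l0 s by (simp add: nth_ins)
    moreover have "ins M s w ! s = M" using s by (simp add: nth_ins)
    moreover have "w!lab w < M" using lt l2 by auto
    ultimately show False using A st ne l l0 s unfolding av_def
      by (metis (no_types, lifting) Suc_le_mono diff_less le_imp_less_Suc length_ins less_one linorder_neqE_nat)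
  qed
  ultimately show "av w \<and> s \<le> lab w" by simp
next
  assume B: "av w \<and> s \<le> lab w"
  show "av (ins M s w)"
    unfolding av_def
  proof
    assume "\<exists>a b c. a < b \<and> b < c \<and> c < length (ins M s w) \<and> ins M s w ! a < ins M s w ! b \<and> ins M s w ! b < ins M s w ! c"
    then obtain a b c where abc: "a < b" "b < c" "c < length (ins M s w)" "ins M s w ! a < ins M s w ! b" "ins M s w ! b < ins M s w ! c" by blast
    have lenv: "length (ins M s w) = Suc (length w)" using s by simp
    have vlt: "i \<noteq> s \<Longrightarrow> i < length (ins M s w) \<Longrightarrow> ins M s w ! i < M" for i
      using lt s by (auto simp: nth_ins)
    show False
    proof (cases "c = s")
      case True
      then have "w!b < w!a" using lab_dec[of a b w] abc B by simp
      moreover have "ins M s w ! a = w!a" "ins M s w ! b = w!b" using True abc s by (auto simp: nth_ins)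
      ultimately show False using abc by simp
    next
      case False
      have "a \<noteq> s" using vlt[of b] vlt[of c] abc False by (metis less_trans nth_ins s order_less_asym)
      moreover have "b \<noteq> s" using vlt[of c] abc False by (metis nth_ins s order_less_asym)
      define g where "g = (\<lambda>i::nat. if i < s then i else i - 1)"
      have gi: "i \<noteq> s \<Longrightarrow> ins M s w ! i = w ! g i" for i using s by (auto simp: g_def nth_ins)
      have "g a < g b" "g b < g c" "g c < length w" using abc \<open>a\<noteq>s\<close> \<open>b\<noteq>s\<close> False lenv s
        by (auto simp: g_def)
      moreover have "w ! g a < w ! g b" "w ! g b < w ! g c"
        using abc gi \<open>a\<noteq>s\<close> \<open>b\<noteq>s\<close> False by auto
      ultimately show False using B unfolding av_def by blast
    qed
  qed
qed

lemma lab_ins: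
  assumes lt: "\<forall>x\<in>set w. x < M" and s: "s \<le> lab w"
  shows "lab (ins M s w) = (if s = 0 then Suc (lab w) else s)"
proof (cases "s = 0")
  case True
  then show ?thesis using lt by (cases w) (auto simp: ins_def)
next
  case False
  have sl: "s \<le> length w" using s lab_le order_trans by blast
  have "lab (ins M s w) = s"
  proof (rule lab_eqI)
    show "0 < s" using False by simp
    show "s \<le> length (ins M s w)" using sl by simp
    show "ins M s w ! Suc i < ins M s w ! i" if "Suc i < s" for i
      using that lab_dec[of i "Suc i" w] s by (simp add: nth_ins sl)
    show "\<not> ins M s w ! s < ins M s w ! (s - 1)" if "s < length (ins M s w)"
    proof -
      have "w!(s-1) < M" using lt sl False by auto
      then show ?thesis using sl False by (simp add: nth_ins)
    qed
  qed
  then show ?thesis using False by simp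
qed

lemma asc_ins:
  assumes lt: "\<forall>x\<in>set w. x < M" and s: "s \<le> lab w"
  shows "asc (ins M s w) q \<longleftrightarrow> (Suc q = s \<or> (s < q \<and> asc w (q-1)))"
proof -
  have sl: "s \<le> length w" using s lab_le order_trans by blast
  consider "Suc q < s" | "Suc q = s" | "q = s" | "s < q" by linarith
  then show ?thesis
  proof cases
    case 1
    then have "w!(Suc q) < w!q" using lab_dec[of q "Suc q" w] s by simp
    then show ?thesis using 1 sl by (auto simp: asc_def nth_ins)
  next
    case 2
    then have "w!q < M" using lt sl by auto
    then show ?thesis using 2 sl by (auto simp: asc_def nth_ins)
  next
    case 3
    then have "Suc s < Suc (length w) \<Longrightarrow> w!s < M" using lt by auto
    then show ?thesis using 3 sl by (auto simp: asc_def nth_ins)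
  next
    case 4
    then obtain q' where q: "q = Suc q'" by (cases q) auto
    show ?thesis using 4 sl by (auto simp: asc_def nth_ins q)
  qed
qed

lemma set_ins: "set (ins M s w) = insert M (set w)"
  by (simp add: ins_def) (metis Un_insert_right append_take_drop_id set_append)

definition AV :: "nat \<Rightarrow> nat list set" where
  "AV N = {w. distinct w \<and> set w = {1..N} \<and> av w}"

lemma AV_length: "w \<in> AV N \<Longrightarrow> length w = N"
  unfolding AV_def using distinct_card by fastforce

lemma finite_AV: "finite (AV N)"
proof -
  have "AV N \<subseteq> {w. set w \<subseteq> {1..N} \<and> length w = N}" using AV_length by (auto simp: AV_def)
  moreover have "finite {w. set w \<subseteq> {1..N} \<and> length w = N}" by (rule finite_lists_length_eq) simp
  ultimately show ?thesis by (rule finite_subset)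
qed

lemma tree:
  "card {v \<in> AV (Suc N). \<Phi> v} = (\<Sum>w\<in>AV N. card {s. s \<le> lab w \<and> \<Phi> (ins (Suc N) s w)})"
proof -
  let ?M = "Suc N"
  let ?S = "SIGMA w:AV N. {s. s \<le> lab w \<and> \<Phi> (ins ?M s w)}"
  let ?f = "\<lambda>(w,s). ins ?M s w"
  have lt: "\<forall>x\<in>set w. x < ?M" if "w \<in> AV N" for w using that by (auto simp: AV_def)
  have nm: "?M \<notin> set w" if "w \<in> AV N" for w using that by (auto simp: AV_def)
  have sl: "s \<le> length w" if "s \<le> lab w" for s w using that lab_le order_trans by blast
  have "bij_betw ?f ?S {v \<in> AV (Suc N). \<Phi> v}"
  proof (rule bij_betw_imageI)
    show "inj_on ?f ?S"
    proof (rule inj_onI)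
      fix x y assume x: "x \<in> ?S" and y: "y \<in> ?S" and e: "?f x = ?f y"
      obtain w s where xs: "x = (w,s)" by (cases x)
      obtain w' s' where ys: "y = (w',s')" by (cases y)
      have w: "w \<in> AV N" "s \<le> lab w" and w': "w' \<in> AV N" "s' \<le> lab w'" using x y xs ys by auto
      have "take s w @ ?M # drop s w = take s' w' @ ?M # drop s' w'" using e xs ys by (simp add: ins_def)
      moreover have h1: "?M \<notin> set (take s w)" and h2: "?M \<notin> set (drop s w)" using nm[OF w(1)]
        by (meson in_set_takeD in_set_dropD)+
      ultimately have t1: "take s w = take s' w'" and t2: "drop s w = drop s' w'"
        using append_Cons_eq_iff[OF h1 h2] by simp_all
      have "w = w'"
      proof -
        have "w = take s w @ drop s w" by simp
        also have "\<dots> = take s' w' @ drop s' w'" using t1 t2 by simp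
        also have "\<dots> = w'" by simp
        finally show ?thesis .
      qed
      moreover have "s = s'"
      proof -
        have "s = length (take s w)" using sl[OF w(2)] by simp
        also have "\<dots> = length (take s' w')" using t1 by simp
        also have "\<dots> = s'" using sl[OF w'(2)] \<open>w = w'\<close> by simp
        finally show ?thesis .
      qed
      ultimately show "x = y" using xs ys by simp
    qed
    show "?f ` ?S = {v \<in> AV (Suc N). \<Phi> v}"
    proof
      show "?f ` ?S \<subseteq> {v \<in> AV (Suc N). \<Phi> v}"
      proof
        fix v assume "v \<in> ?f ` ?S"
        then obtain w s where w: "w \<in> AV N" "s \<le> lab w" "\<Phi> (ins ?M s w)" and v: "v = ins ?M s w" by auto
        have d: "distinct w" and sw: "set w = {1..N}" and a: "av w" using w by (auto simp: AV_def)
        have "distinct v" using d nm[OF w(1)] v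
          by (auto simp: ins_def set_take_disj_set_drop_if_distinct dest: in_set_takeD in_set_dropD)
        moreover have "set v = {1..Suc N}" using v sw by (auto simp: set_ins)
        moreover have "av v" using av_ins[OF lt[OF w(1)] sl[OF w(2)] d] a w(2) v by simp
        ultimately show "v \<in> {v \<in> AV (Suc N). \<Phi> v}" using w(3) v by (simp add: AV_def)
      qed
      show "{v \<in> AV (Suc N). \<Phi> v} \<subseteq> ?f ` ?S"
      proof
        fix v assume v: "v \<in> {v \<in> AV (Suc N). \<Phi> v}"
        then have "?M \<in> set v" by (auto simp: AV_def)
        then obtain xs ys where vs: "v = xs @ ?M # ys" by (meson split_list)
        define w where "w = xs @ ys"
        define s where "s = length xs"
        have iv: "ins ?M s w = v" using vs by (simp add: ins_def w_def s_def)
        have dv: "distinct v" and sv: "set v = {1..Suc N}" and av: "av v" using v by (auto simp: AV_def)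
        have dw: "distinct w" using dv vs by (simp add: w_def)
        have "?M \<notin> set w" using dv vs by (simp add: w_def)
        moreover have "set v = insert ?M (set w)" using vs by (auto simp: w_def)
        ultimately have "set w = set v - {?M}" by blast
        then have sw: "set w = {1..N}" using sv by (simp add: atLeastAtMostSuc_conv)
        have lw: "\<forall>x\<in>set w. x < ?M" using sw by auto
        have slen: "s \<le> length w" by (simp add: s_def w_def)
        have "av w \<and> s \<le> lab w" using av_ins[OF lw slen dw] av iv by simp
        then have "(w,s) \<in> ?S" using dw sw iv v by (auto simp: AV_def)
        then show "v \<in> ?f ` ?S" using iv by (metis (no_types, lifting) case_prod_conv image_eqI)
      qed
    qed
  qed
  then have "card ?S = card {v \<in> AV (Suc N). \<Phi> v}" by (rule bij_betw_same_card)
  moreover have "card ?S = (\<Sum>w\<in>AV N. card {s. s \<le> lab w \<and> \<Phi> (ins (Suc N) s w)})"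
    by (rule card_SigmaI) (auto simp: finite_AV)
  ultimately show ?thesis by simp
qed




lemma sum_ind: "finite A \<Longrightarrow> (\<Sum>w\<in>A. (if P w then 1 else 0::nat)) = card {w\<in>A. P w}"
  by (simp add: sum.inter_filter[symmetric])

lemma card_by_lab:
  assumes "finite A" "finite T"
  shows "card {w\<in>A. P w \<and> lab w \<in> T} = (\<Sum>t\<in>T. card {w\<in>A. P w \<and> lab w = t})"
  using assms(2)
proof (induction T rule: finite_induct)
  case empty then show ?case by simp
next
  case (insert t T)
  have "{w\<in>A. P w \<and> lab w \<in> insert t T} = {w\<in>A. P w \<and> lab w = t} \<union> {w\<in>A. P w \<and> lab w \<in> T}" by auto
  moreover have "card ({w\<in>A. P w \<and> lab w = t} \<union> {w\<in>A. P w \<and> lab w \<in> T}) =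
     card {w\<in>A. P w \<and> lab w = t} + card {w\<in>A. P w \<and> lab w \<in> T}"
    by (rule card_Un_disjoint) (use assms(1) insert(2) in auto)
  ultimately show ?case using insert by simp
qed

definition PL :: "nat \<Rightarrow> nat \<Rightarrow> nat" where
  "PL N t = card {w\<in>AV N. lab w = t}"

lemma AV_lab_le: "w \<in> AV N \<Longrightarrow> lab w \<le> N"
proof -
  assume "w \<in> AV N"
  then have "length w = N" by (rule AV_length)
  then show ?thesis using lab_le[of w] by simp
qed

lemma AV_lab_pos: "w \<in> AV (Suc N) \<Longrightarrow> 0 < lab w"
proof -
  assume "w \<in> AV (Suc N)"
  then have "length w = Suc N" by (rule AV_length)
  then have "w \<noteq> []" by auto
  then show ?thesis by (rule lab_pos)
qed

lemma card_lab_ge: "card {w\<in>AV N. s \<le> lab w} = (\<Sum>t\<in>{s..N}. PL N t)"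
proof -
  have "{w\<in>AV N. s \<le> lab w} = {w\<in>AV N. True \<and> lab w \<in> {s..N}}" using AV_lab_le by auto
  then show ?thesis using card_by_lab[OF finite_AV, where T="{s..N}" and P="\<lambda>_. True"] by (simp add: PL_def)
qed

lemma lt_of_AV: "w \<in> AV N \<Longrightarrow> \<forall>x\<in>set w. x < Suc N"
  by (auto simp: AV_def)

lemma PL_rec:
  assumes "1 \<le> s"
  shows "PL (Suc N) s = card {w\<in>AV N. Suc (lab w) = s} + card {w\<in>AV N. s \<le> lab w}"
proof -
  have "PL (Suc N) s = (\<Sum>w\<in>AV N. card {s'. s' \<le> lab w \<and> lab (ins (Suc N) s' w) = s})"
    unfolding PL_def by (rule tree)
  also have "\<dots> = (\<Sum>w\<in>AV N. (if Suc (lab w) = s then 1 else 0) + (if s \<le> lab w then 1 else 0))"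
  proof (rule sum.cong[OF refl])
    fix w assume w: "w \<in> AV N"
    have "{s'. s' \<le> lab w \<and> lab (ins (Suc N) s' w) = s} =
      (if Suc (lab w) = s then {0} else {}) \<union> (if s \<le> lab w then {s} else {})"
      using lab_ins[OF lt_of_AV[OF w]] assms by (auto split: if_splits)
    then show "card {s'. s' \<le> lab w \<and> lab (ins (Suc N) s' w) = s} =
      (if Suc (lab w) = s then 1 else 0) + (if s \<le> lab w then 1 else 0)"
      using assms by auto
  qed
  also have "\<dots> = card {w\<in>AV N. Suc (lab w) = s} + card {w\<in>AV N. s \<le> lab w}"
    by (simp add: sum.distrib sum_ind finite_AV)
  finally show ?thesis .
qed

lemma AV0: "AV 0 = {[]}"
  by (auto simp: AV_def av_def)

lemma PL_Suc_0: "PL (Suc N) 0 = 0"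
proof -
  have h: "{w\<in>AV (Suc N). lab w = 0} = {}" by (auto dest: AV_lab_pos)
  show ?thesis unfolding PL_def h by simp
qed

lemma PL_rec2:
  assumes "1 \<le> s"
  shows "PL (Suc N) s = PL N (s - 1) + (\<Sum>t\<in>{s..N}. PL N t)"
proof -
  have "{w\<in>AV N. Suc (lab w) = s} = {w\<in>AV N. lab w = s - 1}" using assms by auto
  then show ?thesis using PL_rec[OF assms] card_lab_ge[of N s] by (simp add: PL_def)
qed

definition B :: "nat \<Rightarrow> nat \<Rightarrow> int" where
  "B N t = int ((2*N - t - 1) choose (N - 1)) - int ((2*N - t - 1) choose N)"

lemma B_N_0: "1 \<le> N \<Longrightarrow> B N 0 = 0"
proof -
  assume "1 \<le> N"
  then have "(2*N - 1) choose (N - 1) = (2*N - 1) choose ((2*N - 1) - (N - 1))"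
    by (intro binomial_symmetric) simp
  moreover have "(2*N - 1) - (N - 1) = N" using \<open>1 \<le> N\<close> by simp
  ultimately show ?thesis by (simp add: B_def)
qed

lemma B_top: "1 \<le> N \<Longrightarrow> B (Suc N) (Suc (Suc N)) = 0"
  by (simp add: B_def binomial_eq_0)

lemma tele:
  assumes "1 \<le> N" "1 \<le> t" "t \<le> Suc N"
  shows "B (Suc N) t - B (Suc N) (Suc t) = B N (t - 1)"
proof -
  obtain m where m: "2*N - t = m" by simp
  have e1: "2 * Suc N - t - 1 = Suc m" using assms m by simp
  have e2: "2 * Suc N - Suc t - 1 = m" using assms m by simp
  have e3: "2 * N - (t - 1) - 1 = m" using assms m by simp
  obtain k where k: "N = Suc k" using assms by (cases N) auto
  show ?thesis unfolding B_def e1 e2 e3 using k by simp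
qed

lemma sumB:
  assumes "1 \<le> N" "1 \<le> s" "s \<le> Suc N"
  shows "(\<Sum>t\<in>{s..N}. B N t) = B (Suc N) (Suc s)"
  using assms(3)
proof (induction "Suc N - s" arbitrary: s)
  case 0
  then have True: "s = Suc N" by simp
  have "B (Suc N) (Suc s) = B (Suc N) (Suc (Suc N))" using True by simp
  also have "\<dots> = 0" using B_top[OF assms(1)] .
  finally show ?case using True by simp
next
  case (Suc k)
  show ?case
  proof (cases "s = Suc N")
    case True
    have "B (Suc N) (Suc s) = B (Suc N) (Suc (Suc N))" using True by simp
    also have "\<dots> = 0" using B_top[OF assms(1)] .
    finally show ?thesis using True by simp
  next
    case False
    then have sN: "s \<le> N" using Suc by simp
    have "{s..N} = insert s {Suc s..N}" using sN by auto
    then have "(\<Sum>t\<in>{s..N}. B N t) = B N s + (\<Sum>t\<in>{Suc s..N}. B N t)" by simp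
    also have "(\<Sum>t\<in>{Suc s..N}. B N t) = B (Suc N) (Suc (Suc s))" using Suc sN by simp
    also have "B N s + B (Suc N) (Suc (Suc s)) = B (Suc N) (Suc s)"
      using tele[OF assms(1), of "Suc s"] sN by simp
    finally show ?thesis .
  qed
qed

lemma PL_B: "1 \<le> N \<Longrightarrow> 1 \<le> t \<Longrightarrow> t \<le> N \<Longrightarrow> int (PL N t) = B N t"
proof (induction N arbitrary: t rule: nat_induct_at_least)
  case base
  then have t: "t = 1" by simp
  have e: "{w. w = [] \<and> lab w = 0} = {[]}" by auto
  have "PL 1 1 = 1" using PL_rec2[of 1 0] by (simp add: PL_def AV0 e)
  then show ?case using t by (simp add: B_def)
next
  case (Suc N)
  have low: "int (PL N (t - 1)) = B N (t - 1)"
  proof (cases "t = 1")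
    case True
    obtain k where "N = Suc k" using Suc(1) by (cases N) auto
    then show ?thesis using True B_N_0[OF Suc(1)] PL_Suc_0 by simp
  next
    case False then show ?thesis using Suc by simp
  qed
  have "int (PL (Suc N) t) = int (PL N (t - 1)) + (\<Sum>t'\<in>{t..N}. int (PL N t'))"
    using PL_rec2[OF Suc(3), of N] by simp
  also have "(\<Sum>t'\<in>{t..N}. int (PL N t')) = (\<Sum>t'\<in>{t..N}. B N t')"
    using Suc by (intro sum.cong) auto
  also have "\<dots> = B (Suc N) (Suc t)" using sumB[OF Suc(1) Suc(3)] Suc(4) by simp
  also have "int (PL N (t - 1)) + B (Suc N) (Suc t) = B (Suc N) t"
    using low tele[OF Suc(1) Suc(3) Suc(4)] by simp
  finally show ?case .
qed

lemma card_AV_PL: "card (AV N) = PL (Suc N) 1"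
proof -
  have "PL (Suc N) 1 = card {w\<in>AV N. lab w = 0} + card {w\<in>AV N. 1 \<le> lab w}"
    using PL_rec[of 1 N] by simp
  also have "\<dots> = card ({w\<in>AV N. lab w = 0} \<union> {w\<in>AV N. 1 \<le> lab w})"
    by (rule card_Un_disjoint[symmetric]) (auto simp: finite_AV)
  also have "{w\<in>AV N. lab w = 0} \<union> {w\<in>AV N. 1 \<le> lab w} = AV N" by auto
  finally show ?thesis by simp
qed

lemma card_AV: "int (card (AV N)) = int ((2*N) choose N) - int ((2*N) choose (Suc N))"
proof -
  have "int (card (AV N)) = B (Suc N) 1" using card_AV_PL PL_B[of "Suc N" 1] by simp
  also have "2 * Suc N - 1 - 1 = 2 * N" by simp
  then have "B (Suc N) 1 = int ((2*N) choose N) - int ((2*N) choose (Suc N))"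
    unfolding B_def by simp
  finally show ?thesis .
qed




lemma asc_lab_le: "asc w q \<Longrightarrow> lab w \<le> Suc q"
proof (rule ccontr)
  assume a: "asc w q" and "\<not> lab w \<le> Suc q"
  then have "Suc q < lab w" by simp
  then have "w!(Suc q) < w!q" using lab_dec[of q "Suc q" w] by simp
  then show False using a by (simp add: asc_def)
qed

lemma asc_lab_ne:
  assumes av: "av w" and d: "distinct w" and a: "asc w q"
  shows "lab w \<noteq> q"
proof
  assume l: "lab w = q"
  have len: "Suc q < length w" using a by (simp add: asc_def)
  then have "w \<noteq> []" by auto
  then have q0: "0 < q" using lab_pos l by blast
  have "\<not> w!q < w!(q-1)" using lab_stop[of w] l len by simp
  moreover have "w!q \<noteq> w!(q-1)" using d len q0 by (simp add: nth_eq_iff_index_eq)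
  ultimately have "w!(q-1) < w!q" by simp
  moreover have "w!q < w!(Suc q)" using a by (simp add: asc_def)
  ultimately have "\<exists>a b c. a < b \<and> b < c \<and> c < length w \<and> w!a < w!b \<and> w!b < w!c"
    using len q0 by (intro exI[of _ "q-1"] exI[of _ q] exI[of _ "Suc q"]) auto
  then show False using av unfolding av_def by blast
qed

lemma lab_asc:
  assumes d: "distinct w" and l: "lab w = Suc q" and len: "Suc q < length w"
  shows "asc w q"
proof -
  have "\<not> w!(Suc q) < w!q" using lab_stop[of w] l len by simp
  moreover have "w!(Suc q) \<noteq> w!q" using d len by (simp add: nth_eq_iff_index_eq)
  ultimately show ?thesis using len by (simp add: asc_def)
qed

lemma sum_split3:
  assumes "1 \<le> a" "a \<le> k" "k \<le> n"
  shows "(\<Sum>t\<in>{a..n}. f t) = (\<Sum>t\<in>{a..k-1}. f t) + f k + (\<Sum>t\<in>{Suc k..n}. f t)"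
proof -
  have e: "{a..n} = {a..k-1} \<union> ({k} \<union> {Suc k..n})" using assms by auto
  have "(\<Sum>t\<in>{a..n}. f t) = (\<Sum>t\<in>{a..k-1}. f t) + (\<Sum>t\<in>{k} \<union> {Suc k..n}. f t)"
    unfolding e by (rule sum.union_disjoint) (use assms in auto)
  also have "(\<Sum>t\<in>{k} \<union> {Suc k..n}. f t) = f k + (\<Sum>t\<in>{Suc k..n}. f t)"
    by (rule sum.union_disjoint[THEN trans]) auto
  finally show ?thesis by (simp add: add.assoc)
qed

lemma AscL:
  "1 \<le> t \<Longrightarrow> t < q \<Longrightarrow> q < N \<Longrightarrow> card {w\<in>AV (Suc N). asc w q \<and> lab w = t} = PL N t"
proof (induction N arbitrary: q t)
  case 0 then show ?case by simp
next
  case (Suc N)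
  note IH = Suc.IH
  have t1: "1 \<le> t" and tq: "t < q" and qN: "q < Suc N" using Suc.prems by auto
  have N1: "1 \<le> N" using t1 tq qN by simp
  let ?M = "Suc (Suc N)"
  have "card {v\<in>AV (Suc (Suc N)). asc v q \<and> lab v = t} =
    (\<Sum>w\<in>AV (Suc N). card {s. s \<le> lab w \<and> (asc (ins ?M s w) q \<and> lab (ins ?M s w) = t)})"
    by (rule tree)
  also have "\<dots> = (\<Sum>w\<in>AV (Suc N). (if asc w (q-1) \<and> Suc (lab w) = t then 1 else 0)
       + (if asc w (q-1) \<and> t \<le> lab w then 1 else 0))"
  proof (rule sum.cong[OF refl])
    fix w assume w: "w \<in> AV (Suc N)"
    have "{s. s \<le> lab w \<and> (asc (ins ?M s w) q \<and> lab (ins ?M s w) = t)} =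
      (if asc w (q-1) \<and> Suc (lab w) = t then {0} else {}) \<union> (if asc w (q-1) \<and> t \<le> lab w then {t} else {})"
    proof (rule set_eqI)
      fix s
      show "s \<in> {s. s \<le> lab w \<and> (asc (ins ?M s w) q \<and> lab (ins ?M s w) = t)} \<longleftrightarrow>
        s \<in> (if asc w (q-1) \<and> Suc (lab w) = t then {0} else {}) \<union> (if asc w (q-1) \<and> t \<le> lab w then {t} else {})"
      proof (cases "s \<le> lab w")
        case False then show ?thesis by auto
      next
        case True
        note L = lab_ins[OF lt_of_AV[OF w] True] and A = asc_ins[OF lt_of_AV[OF w] True]
        show ?thesis unfolding mem_Collect_eq L A using t1 tq True by (cases "s = 0") auto
      qed
    qed
    then show "card {s. s \<le> lab w \<and> (asc (ins ?M s w) q \<and> lab (ins ?M s w) = t)} =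
      (if asc w (q-1) \<and> Suc (lab w) = t then 1 else 0) + (if asc w (q-1) \<and> t \<le> lab w then 1 else 0)"
      using t1 by auto
  qed
  also have "\<dots> = card {w\<in>AV (Suc N). asc w (q-1) \<and> Suc (lab w) = t} + card {w\<in>AV (Suc N). asc w (q-1) \<and> t \<le> lab w}"
    by (simp add: sum.distrib sum_ind finite_AV)
  also have "card {w\<in>AV (Suc N). asc w (q-1) \<and> Suc (lab w) = t} = PL N (t - 1)"
  proof (cases "t = 1")
    case True
    have h: "{w\<in>AV (Suc N). asc w (q-1) \<and> Suc (lab w) = t} = {}" using True by (auto dest: AV_lab_pos)
    obtain k where "N = Suc k" using N1 by (cases N) auto
    then show ?thesis unfolding h using True PL_Suc_0 by simp
  next
    case False
    have "{w\<in>AV (Suc N). asc w (q-1) \<and> Suc (lab w) = t} = {w\<in>AV (Suc N). asc w (q-1) \<and> lab w = t - 1}"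
      using t1 by auto
    also have "card \<dots> = PL N (t - 1)" using IH[of "t - 1" "q - 1"] False t1 tq qN by simp
    finally show ?thesis .
  qed
  also have "card {w\<in>AV (Suc N). asc w (q-1) \<and> t \<le> lab w} = (\<Sum>t'\<in>{t..N}. PL N t')"
  proof -
    have e: "{w\<in>AV (Suc N). asc w (q-1) \<and> t \<le> lab w} =
       {w\<in>AV (Suc N). asc w (q-1) \<and> lab w \<in> {t..q-2}} \<union> {w\<in>AV (Suc N). lab w = q}"
    proof (rule set_eqI, rule iffI)
      fix w assume "w \<in> {w\<in>AV (Suc N). asc w (q-1) \<and> t \<le> lab w}"
      then have w: "w \<in> AV (Suc N)" "asc w (q-1)" "t \<le> lab w" by auto
      have "lab w \<le> q" using asc_lab_le[OF w(2)] tq by simp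
      moreover have "lab w \<noteq> q - 1" using asc_lab_ne[OF _ _ w(2)] w(1) by (auto simp: AV_def)
      ultimately show "w \<in> {w\<in>AV (Suc N). asc w (q-1) \<and> lab w \<in> {t..q-2}} \<union> {w\<in>AV (Suc N). lab w = q}"
        using w by auto
    next
      fix w assume "w \<in> {w\<in>AV (Suc N). asc w (q-1) \<and> lab w \<in> {t..q-2}} \<union> {w\<in>AV (Suc N). lab w = q}"
      then consider "w \<in> AV (Suc N)" "asc w (q-1)" "lab w \<in> {t..q-2}" | "w \<in> AV (Suc N)" "lab w = q" by auto
      then show "w \<in> {w\<in>AV (Suc N). asc w (q-1) \<and> t \<le> lab w}"
      proof cases
        case 1 then show ?thesis by auto
      next
        case 2
        have "asc w (q-1)"
          by (rule lab_asc) (use 2 tq qN AV_length[OF 2(1)] in \<open>auto simp: AV_def\<close>)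
        then show ?thesis using 2 tq by auto
      qed
    qed
    have "card ({w\<in>AV (Suc N). asc w (q-1) \<and> lab w \<in> {t..q-2}} \<union> {w\<in>AV (Suc N). lab w = q}) =
      card {w\<in>AV (Suc N). asc w (q-1) \<and> lab w \<in> {t..q-2}} + card {w\<in>AV (Suc N). lab w = q}"
      by (rule card_Un_disjoint) (use tq in \<open>auto simp: finite_AV\<close>)
    also have "card {w\<in>AV (Suc N). asc w (q-1) \<and> lab w \<in> {t..q-2}} = (\<Sum>t'\<in>{t..q-2}. PL N t')"
    proof -
      have "card {w\<in>AV (Suc N). asc w (q-1) \<and> lab w \<in> {t..q-2}} =
        (\<Sum>t'\<in>{t..q-2}. card {w\<in>AV (Suc N). asc w (q-1) \<and> lab w = t'})"
        by (rule card_by_lab) (auto simp: finite_AV)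
      also have "\<dots> = (\<Sum>t'\<in>{t..q-2}. PL N t')"
        by (rule sum.cong[OF refl]) (use IH t1 tq qN in auto)
      finally show ?thesis .
    qed
    also have "card {w\<in>AV (Suc N). lab w = q} = PL N (q - 1) + (\<Sum>t'\<in>{q..N}. PL N t')"
      using PL_rec2[of q N] tq t1 by (simp add: PL_def)
    also have "(\<Sum>t'\<in>{t..q-2}. PL N t') + (PL N (q - 1) + (\<Sum>t'\<in>{q..N}. PL N t')) = (\<Sum>t'\<in>{t..N}. PL N t')"
    proof -
      have "(\<Sum>t'\<in>{t..N}. PL N t') = (\<Sum>t'\<in>{t..q-1-1}. PL N t') + PL N (q-1) + (\<Sum>t'\<in>{Suc (q-1)..N}. PL N t')"
        by (rule sum_split3) (use t1 tq qN in auto)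
      moreover have "q - 1 - 1 = q - 2" "Suc (q - 1) = q" using tq by auto
      ultimately show ?thesis by simp
    qed
    finally show ?thesis unfolding e .
  qed
  also have "PL N (t - 1) + (\<Sum>t'\<in>{t..N}. PL N t') = PL (Suc N) t" using PL_rec2[OF t1] by simp
  finally show ?case by (simp add: PL_def)
qed

lemma card_AV_sum: "1 \<le> M \<Longrightarrow> card (AV M) = (\<Sum>t\<in>{1..M}. PL M t)"
proof -
  assume M: "1 \<le> M"
  obtain k where k: "M = Suc k" using M by (cases M) auto
  have h: "{w\<in>AV M. True \<and> lab w \<in> {1..M}} = AV M"
    using AV_lab_le[of _ M] AV_lab_pos[of _ k] k by fastforce
  have "card {w\<in>AV M. True \<and> lab w \<in> {1..M}} = (\<Sum>t\<in>{1..M}. card {w\<in>AV M. True \<and> lab w = t})"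
    by (rule card_by_lab[OF finite_AV]) simp
  then show ?thesis unfolding h PL_def by simp
qed

lemma asc_count:
  assumes qM: "q < M"
  shows "card {w\<in>AV (Suc M). asc w q} = card (AV M)"
proof -
  have M1: "1 \<le> M" using qM by simp
  have e: "{w\<in>AV (Suc M). asc w q} = {w\<in>AV (Suc M). asc w q \<and> lab w \<in> {1..q-1}} \<union> {w\<in>AV (Suc M). lab w = Suc q}"
  proof (rule set_eqI, rule iffI)
    fix w assume "w \<in> {w\<in>AV (Suc M). asc w q}"
    then have w: "w \<in> AV (Suc M)" "asc w q" by auto
    have "lab w \<le> Suc q" using asc_lab_le[OF w(2)] .
    moreover have "lab w \<noteq> q" using asc_lab_ne[OF _ _ w(2)] w(1) by (auto simp: AV_def)
    moreover have "0 < lab w" using AV_lab_pos[OF w(1)] .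
    ultimately show "w \<in> {w\<in>AV (Suc M). asc w q \<and> lab w \<in> {1..q-1}} \<union> {w\<in>AV (Suc M). lab w = Suc q}"
      using w by auto
  next
    fix w assume "w \<in> {w\<in>AV (Suc M). asc w q \<and> lab w \<in> {1..q-1}} \<union> {w\<in>AV (Suc M). lab w = Suc q}"
    then consider "w \<in> AV (Suc M)" "asc w q" | "w \<in> AV (Suc M)" "lab w = Suc q" by auto
    then show "w \<in> {w\<in>AV (Suc M). asc w q}"
    proof cases
      case 1 then show ?thesis by auto
    next
      case 2
      have "asc w q"
        by (rule lab_asc) (use 2 qM AV_length[OF 2(1)] in \<open>auto simp: AV_def\<close>)
      then show ?thesis using 2 by auto
    qed
  qed
  have "card {w\<in>AV (Suc M). asc w q} = card {w\<in>AV (Suc M). asc w q \<and> lab w \<in> {1..q-1}} + card {w\<in>AV (Suc M). lab w = Suc q}"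
    unfolding e by (rule card_Un_disjoint) (auto simp: finite_AV)
  also have "card {w\<in>AV (Suc M). asc w q \<and> lab w \<in> {1..q-1}} = (\<Sum>t\<in>{1..q-1}. PL M t)"
  proof -
    have "card {w\<in>AV (Suc M). asc w q \<and> lab w \<in> {1..q-1}} =
      (\<Sum>t\<in>{1..q-1}. card {w\<in>AV (Suc M). asc w q \<and> lab w = t})"
      by (rule card_by_lab) (auto simp: finite_AV)
    also have "\<dots> = (\<Sum>t\<in>{1..q-1}. PL M t)"
      by (rule sum.cong[OF refl]) (use AscL qM in auto)
    finally show ?thesis .
  qed
  also have "card {w\<in>AV (Suc M). lab w = Suc q} = PL M q + (\<Sum>t\<in>{Suc q..M}. PL M t)"
    using PL_rec2[of "Suc q" M] by (simp add: PL_def)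
  also have "(\<Sum>t\<in>{1..q-1}. PL M t) + (PL M q + (\<Sum>t\<in>{Suc q..M}. PL M t)) = card (AV M)"
  proof (cases "q = 0")
    case True
    obtain k where k: "M = Suc k" using M1 by (cases M) auto
    have "{Suc 0..M} = {1..M}" by simp
    then show ?thesis using True PL_Suc_0[of k] k card_AV_sum[OF M1] by simp
  next
    case False
    have "(\<Sum>t\<in>{1..M}. PL M t) = (\<Sum>t\<in>{1..q-1}. PL M t) + PL M q + (\<Sum>t\<in>{Suc q..M}. PL M t)"
      by (rule sum_split3) (use False qM in auto)
    then show ?thesis using card_AV_sum[OF M1] by simp
  qed
  finally show ?thesis .
qed

definition desc :: "nat list \<Rightarrow> nat \<Rightarrow> bool" where
  "desc w q \<longleftrightarrow> Suc q < length w \<and> w!(Suc q) < w!q"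

lemma desc_count:
  assumes qM: "q < M"
  shows "card {w\<in>AV (Suc M). desc w q} = card (AV (Suc M)) - card (AV M)"
proof -
  have "{w\<in>AV (Suc M). desc w q} = AV (Suc M) - {w\<in>AV (Suc M). asc w q}"
  proof (rule set_eqI)
    fix w
    show "w \<in> {w\<in>AV (Suc M). desc w q} \<longleftrightarrow> w \<in> AV (Suc M) - {w\<in>AV (Suc M). asc w q}"
    proof (cases "w \<in> AV (Suc M)")
      case True
      have len: "Suc q < length w" using AV_length[OF True] qM by simp
      have "w!(Suc q) \<noteq> w!q" using True len by (auto simp: AV_def nth_eq_iff_index_eq)
      then show ?thesis using True len by (auto simp: asc_def desc_def)
    next
      case False then show ?thesis by auto
    qed
  qed
  then show ?thesis using asc_count[OF qM] by (simp add: card_Diff_subset finite_AV)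
qed




lemma order_iso_123: "order_iso [x,y,z] [1,2,3] \<longleftrightarrow> x < y \<and> y < z"
proof
  assume "order_iso [x,y,z] [1,2,3]"
  then have h: "\<forall>a<3. \<forall>c<3. ([x,y,z]!a < [x,y,z]!c) = ([1,2,3::nat]!a < [1,2,3]!c)"
    by (simp add: order_iso_def)
  show "x < y \<and> y < z" using h[rule_format, of 0 1] h[rule_format, of 1 2] by simp
next
  assume "x < y \<and> y < z"
  then show "order_iso [x,y,z] [1,2,3]"
    unfolding order_iso_def by (auto simp: less_Suc_eq nth_Cons split: nat.splits)
qed

lemma contains123:
  "osp_contains Bs [1,2,3] \<longleftrightarrow>
   (\<exists>i j k x y z. i < j \<and> j < k \<and> k < length Bs \<and> x \<in> Bs!i \<and> y \<in> Bs!j \<and> z \<in> Bs!k \<and> x < y \<and> y < z)"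
proof
  assume "osp_contains Bs [1,2,3]"
  then obtain idx b where h0: "length idx = length [1,2,3::nat]" "length b = length [1,2,3::nat]" "sorted_wrt (<) idx"
    "\<forall>j<length [1,2,3::nat]. idx ! j < length Bs \<and> b ! j \<in> Bs ! (idx ! j)" "order_iso b [1,2,3]"
    unfolding osp_contains_def by blast
  have h: "length idx = 3" "length b = 3" "sorted_wrt (<) idx"
    "\<forall>j<3. idx ! j < length Bs \<and> b ! j \<in> Bs ! (idx ! j)" "order_iso b [1,2,3]"
    using h0 by simp_all
  obtain i j k where idx: "idx = [i,j,k]" using h(1)
    by (cases idx; cases "tl idx"; cases "tl (tl idx)") auto
  obtain x y z where b: "b = [x,y,z]" using h(2)
    by (cases b; cases "tl b"; cases "tl (tl b)") auto
  have "i < j" "j < k" using h(3) idx by auto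
  moreover have "k < length Bs" "x \<in> Bs!i" "y \<in> Bs!j" "z \<in> Bs!k"
    using h(4)[rule_format, of 0] h(4)[rule_format, of 1] h(4)[rule_format, of 2] idx b by auto
  moreover have "x < y \<and> y < z" using h(5) b order_iso_123 by simp
  ultimately show "\<exists>i j k x y z. i < j \<and> j < k \<and> k < length Bs \<and> x \<in> Bs!i \<and> y \<in> Bs!j \<and> z \<in> Bs!k \<and> x < y \<and> y < z"
    by blast
next
  assume "\<exists>i j k x y z. i < j \<and> j < k \<and> k < length Bs \<and> x \<in> Bs!i \<and> y \<in> Bs!j \<and> z \<in> Bs!k \<and> x < y \<and> y < z"
  then obtain i j k x y z where h: "i < j" "j < k" "k < length Bs" "x \<in> Bs!i" "y \<in> Bs!j" "z \<in> Bs!k" "x < y" "y < z"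
    by blast
  have "length [i,j,k] = length [1,2,3::nat]" "length [x,y,z] = length [1,2,3::nat]" by auto
  moreover have "sorted_wrt (<) [i,j,k]" using h by auto
  moreover have "\<forall>jj<length [1,2,3::nat]. [i,j,k] ! jj < length Bs \<and> [x,y,z] ! jj \<in> Bs ! ([i,j,k] ! jj)"
    using h by (auto simp: less_Suc_eq)
  moreover have "order_iso [x,y,z] [1,2,3]" using h order_iso_123 by simp
  ultimately show "osp_contains Bs [1,2,3]" unfolding osp_contains_def by blast
qed

definition idx :: "nat \<Rightarrow> nat \<Rightarrow> nat set" where
  "idx q i = (if i < q then {i} else if i = q then {q, Suc q} else {Suc i})"

definition blk :: "nat list \<Rightarrow> nat \<Rightarrow> nat \<Rightarrow> nat set" where
  "blk w q i = (\<lambda>j. w!j) ` idx q i"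

definition mk :: "nat list \<Rightarrow> nat \<Rightarrow> nat set list" where
  "mk w q = map (blk w q) [0..<length w - 1]"

lemma length_mk[simp]: "length (mk w q) = length w - 1"
  by (simp add: mk_def)

lemma nth_mk[simp]: "i < length w - 1 \<Longrightarrow> mk w q ! i = blk w q i"
  by (simp add: mk_def)

lemma idx_ne: "idx q i \<noteq> {}" by (simp add: idx_def)

lemma idx_bound: "q < M \<Longrightarrow> i < M \<Longrightarrow> idx q i \<subseteq> {..<Suc M}"
  by (auto simp: idx_def)

lemma idx_disj: "i \<noteq> j \<Longrightarrow> idx q i \<inter> idx q j = {}"
  by (auto simp: idx_def)

lemma idx_order: "i < j \<Longrightarrow> a \<in> idx q i \<Longrightarrow> b \<in> idx q j \<Longrightarrow> a < b"
  by (auto simp: idx_def split: if_splits)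

definition gpos :: "nat \<Rightarrow> nat \<Rightarrow> nat" where
  "gpos q a = (if a \<le> q then a else a - 1)"

lemma idx_gpos: "a \<in> idx q (gpos q a)"
  by (auto simp: idx_def gpos_def)

lemma gpos_bound: "q < M \<Longrightarrow> a < Suc M \<Longrightarrow> gpos q a < M"
  by (auto simp: gpos_def)

lemma gpos_mono: "a < b \<Longrightarrow> \<not> (a = q \<and> b = Suc q) \<Longrightarrow> gpos q a < gpos q b"
  by (auto simp: gpos_def)

lemma idx_Union: "q < M \<Longrightarrow> (\<Union>i<M. idx q i) = {..<Suc M}"
proof
  assume "q < M"
  show "(\<Union>i<M. idx q i) \<subseteq> {..<Suc M}" using idx_bound[OF \<open>q < M\<close>] by blast
  show "{..<Suc M} \<subseteq> (\<Union>i<M. idx q i)"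
  proof
    fix a assume "a \<in> {..<Suc M}"
    then have "gpos q a < M" using gpos_bound[OF \<open>q < M\<close>] by simp
    then show "a \<in> (\<Union>i<M. idx q i)" using idx_gpos[of a q] by blast
  qed
qed

lemma blk_Union:
  assumes "length w = Suc M" "q < M"
  shows "(\<Union>i<M. blk w q i) = set w"
proof -
  have "(\<Union>i<M. blk w q i) = (\<lambda>j. w!j) ` (\<Union>i<M. idx q i)" by (simp add: blk_def image_UN)
  also have "\<dots> = (\<lambda>j. w!j) ` {..<length w}" using idx_Union[OF assms(2)] assms(1) by simp
  also have "\<dots> = set w" by (auto simp: in_set_conv_nth)
  finally show ?thesis .
qed

lemma mk_contains:
  assumes len: "length w = Suc M" and qM: "q < M" and de: "desc w q"
  shows "osp_contains (mk w q) [1,2,3] \<longleftrightarrow> \<not> av w"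
proof
  assume "osp_contains (mk w q) [1,2,3]"
  then obtain i j k x y z where h: "i < j" "j < k" "k < M" "x \<in> mk w q!i" "y \<in> mk w q!j" "z \<in> mk w q!k" "x < y" "y < z"
    unfolding contains123 using len by auto
  have "x \<in> blk w q i" "y \<in> blk w q j" "z \<in> blk w q k" using h len by auto
  then obtain a b c where abc: "a \<in> idx q i" "b \<in> idx q j" "c \<in> idx q k" "x = w!a" "y = w!b" "z = w!c"
    unfolding blk_def by blast
  have "a < b" "b < c" using idx_order abc h by blast+
  moreover have "c < length w" using idx_bound[OF qM, of k] h(3) abc(3) len by auto
  ultimately show "\<not> av w" using abc h unfolding av_def by blast
next
  assume "\<not> av w"
  then obtain a b c where h: "a < b" "b < c" "c < length w" "w!a < w!b" "w!b < w!c"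
    unfolding av_def by blast
  have dq: "w!(Suc q) < w!q" using de by (simp add: desc_def)
  have "\<not> (a = q \<and> b = Suc q)" using h dq by auto
  then have 1: "gpos q a < gpos q b" using gpos_mono h by blast
  have "\<not> (b = q \<and> c = Suc q)" using h dq by auto
  then have 2: "gpos q b < gpos q c" using gpos_mono h by blast
  have 3: "gpos q c < M" using gpos_bound[OF qM] h len by simp
  have "w!a \<in> mk w q ! gpos q a" "w!b \<in> mk w q ! gpos q b" "w!c \<in> mk w q ! gpos q c"
    using 1 2 3 len idx_gpos by (auto simp: blk_def)
  then show "osp_contains (mk w q) [1,2,3]" unfolding contains123 using 1 2 3 h len by fastforce
qed

lemma mk_osp:
  assumes w: "w \<in> AV (Suc M)" and qM: "q < M"
  shows "ordered_set_partition (Suc M) M (mk w q)"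
proof -
  have len: "length w = Suc M" using AV_length[OF w] .
  have d: "distinct w" and sw: "set w = {1..Suc M}" using w by (auto simp: AV_def)
  have inj: "inj_on (\<lambda>j. w!j) {..<Suc M}" using d len by (simp add: inj_on_nth)
  show ?thesis unfolding ordered_set_partition_def
  proof (intro conjI allI impI)
    show "length (mk w q) = M" using len by simp
    show "mk w q ! i \<noteq> {}" if "i < M" for i using that len idx_ne by (simp add: blk_def)
    show "mk w q ! i \<inter> mk w q ! j = {}" if "i < M" "j < M" "i \<noteq> j" for i j
    proof -
      have "(\<lambda>j. w!j) ` (idx q i \<inter> idx q j) = (\<lambda>j. w!j) ` idx q i \<inter> (\<lambda>j. w!j) ` idx q j"
        by (rule inj_on_image_Int[OF inj]) (use idx_bound[OF qM] that in auto)
      then show ?thesis using that idx_disj len by (simp add: blk_def)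
    qed
    show "(\<Union>i<M. mk w q ! i) = {1..Suc M}"
      using blk_Union[OF len qM] len sw by simp
  qed
qed

lemma card_blk:
  assumes d: "distinct w" "length w = Suc M" "q < M" "i < M"
  shows "card (blk w q i) = (if i = q then 2 else 1)"
proof -
  have inj: "inj_on (\<lambda>j. w!j) (idx q i)" using d idx_bound[of q M i] by (intro inj_on_nth) auto
  have "card (blk w q i) = card (idx q i)" unfolding blk_def by (rule card_image[OF inj])
  then show ?thesis by (simp add: idx_def)
qed

lemma mk_inj:
  assumes w: "w \<in> AV (Suc M)" "desc w q" "q < M" and w': "w' \<in> AV (Suc M)" "desc w' q'" "q' < M"
    and e: "mk w q = mk w' q'"
  shows "q = q' \<and> w = w'"
proof -
  have len: "length w = Suc M" "length w' = Suc M" using AV_length w(1) w'(1) by auto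
  have d: "distinct w" "distinct w'" using w(1) w'(1) by (auto simp: AV_def)
  have bq: "blk w q i = blk w' q' i" if "i < M" for i
  proof -
    have "blk w q i = mk w q ! i" using that len by simp
    also have "\<dots> = mk w' q' ! i" using e by simp
    also have "\<dots> = blk w' q' i" using that len by simp
    finally show ?thesis .
  qed
  have qq: "q = q'"
  proof (rule ccontr)
    assume "q \<noteq> q'"
    have "card (blk w q q) = 2" using card_blk[OF d(1) len(1) w(3) w(3)] by simp
    moreover have "card (blk w' q' q) = 1" using card_blk[OF d(2) len(2) w'(3) w(3)] \<open>q \<noteq> q'\<close> by simp
    ultimately show False using bq[OF w(3)] by simp
  qed
  have "w!a = w'!a" if "a < Suc M" for a
  proof -
    consider "a < q" | "a = q" | "a = Suc q" | "Suc q < a" by linarith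
    then show ?thesis
    proof cases
      case 1 then show ?thesis using bq[of a] w(3) qq by (auto simp: blk_def idx_def)
    next
      case 2
      have "{w!q, w!Suc q} = {w'!q, w'!Suc q}" using bq[of q] w(3) qq by (auto simp: blk_def idx_def)
      moreover have "w!Suc q < w!q" "w'!Suc q < w'!q" using w(2) w'(2) qq by (auto simp: desc_def)
      ultimately show ?thesis using 2 by (auto simp: doubleton_eq_iff)
    next
      case 3
      have "{w!q, w!Suc q} = {w'!q, w'!Suc q}" using bq[of q] w(3) qq by (auto simp: blk_def idx_def)
      moreover have "w!Suc q < w!q" "w'!Suc q < w'!q" using w(2) w'(2) qq by (auto simp: desc_def)
      ultimately show ?thesis using 3 by (auto simp: doubleton_eq_iff)
    next
      case 4
      then obtain i where i: "a = Suc i" "q < i" by (cases a) auto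
      then have "i < M" using that by simp
      then show ?thesis using bq[of i] i qq by (auto simp: blk_def idx_def)
    qed
  qed
  then have "w = w'" using len by (intro nth_equalityI) auto
  then show ?thesis using qq by simp
qed

lemma all_one:
  assumes "finite I" "\<forall>i\<in>I. 1 \<le> f i" "(\<Sum>i\<in>I. f i) = card I"
  shows "\<forall>i\<in>I. f i = (1::nat)"
proof -
  have "(\<Sum>i\<in>I. f i) = (\<Sum>i\<in>I. 1 + (f i - 1))" using assms(2) by (intro sum.cong) auto
  also have "\<dots> = card I + (\<Sum>i\<in>I. f i - 1)" by (subst sum.distrib) simp
  finally have "(\<Sum>i\<in>I. f i - 1) = 0" using assms(3) by simp
  then have "\<forall>i\<in>I. f i - 1 = 0" using assms(1) by simp
  then show ?thesis using assms(2) by force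
qed

lemma mk_surj:
  assumes osp: "ordered_set_partition (Suc M) M Bs" and nc: "\<not> osp_contains Bs [1,2,3]"
  shows "\<exists>q w. q < M \<and> w \<in> AV (Suc M) \<and> desc w q \<and> mk w q = Bs"
proof -
  have len: "length Bs = M" and ne: "\<And>i. i < M \<Longrightarrow> Bs!i \<noteq> {}"
    and dj: "\<And>i j. i < M \<Longrightarrow> j < M \<Longrightarrow> i \<noteq> j \<Longrightarrow> Bs!i \<inter> Bs!j = {}"
    and un: "(\<Union>i<M. Bs!i) = {1..Suc M}"
    using osp unfolding ordered_set_partition_def by auto
  have sub: "Bs!i \<subseteq> {1..Suc M}" if "i < M" for i using un that by blast
  have fin: "finite (Bs!i)" if "i < M" for i using sub[OF that] finite_subset by blast
  have ge1: "1 \<le> card (Bs!i)" if "i < M" for i using ne[OF that] fin[OF that]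
    by (simp add: Suc_leI card_gt_0_iff)
  have sumc: "(\<Sum>i<M. card (Bs!i)) = Suc M"
  proof -
    have "card (\<Union>i<M. Bs!i) = (\<Sum>i<M. card (Bs!i))"
      by (rule card_UN_disjoint) (use fin dj in auto)
    then show ?thesis using un by simp
  qed
  have "\<exists>q<M. 2 \<le> card (Bs!q)"
  proof (rule ccontr)
    assume "\<not> (\<exists>q<M. 2 \<le> card (Bs!q))"
    then have "\<forall>i<M. card (Bs!i) \<le> 1" by auto
    then have "(\<Sum>i<M. card (Bs!i)) \<le> (\<Sum>i<M. (1::nat))" by (intro sum_mono) auto
    then show False using sumc by simp
  qed
  then obtain q where qM: "q < M" and q2: "2 \<le> card (Bs!q)" by blast
  let ?R = "{..<M} - {q}"
  have split: "(\<Sum>i<M. card (Bs!i)) = card (Bs!q) + (\<Sum>i\<in>?R. card (Bs!i))"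
    using qM by (simp add: sum.remove)
  have cR: "card ?R = M - 1" using qM by simp
  have "(\<Sum>i\<in>?R. (1::nat)) \<le> (\<Sum>i\<in>?R. card (Bs!i))" using ge1 by (intro sum_mono) auto
  then have geR: "M - 1 \<le> (\<Sum>i\<in>?R. card (Bs!i))" using cR by simp
  have cq: "card (Bs!q) = 2" using split sumc geR q2 qM by linarith
  have "(\<Sum>i\<in>?R. card (Bs!i)) = card ?R" using split sumc cq cR qM by simp
  then have one: "\<forall>i\<in>?R. card (Bs!i) = 1" using ge1 by (intro all_one) auto
  have sing: "Bs!i = {the_elem (Bs!i)}" if "i < M" "i \<noteq> q" for i
  proof -
    have "card (Bs!i) = 1" using one that by auto
    then obtain x where "Bs!i = {x}" by (rule card_1_singletonE)
    then show ?thesis by simp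
  qed
  obtain x y where xy: "Bs!q = {x, y}" "x \<noteq> y" using cq by (auto simp: card_2_iff)
  define hi where "hi = max x y"
  define lo where "lo = min x y"
  have hl: "Bs!q = {hi, lo}" "lo < hi" using xy by (auto simp: hi_def lo_def max_def min_def)
  define h where "h a = (if a < q then the_elem (Bs!a) else if a = q then hi else if a = Suc q then lo
      else the_elem (Bs!(a-1)))" for a
  define w where "w = map h [0..<Suc M]"
  have lw: "length w = Suc M" by (simp add: w_def)
  have nw: "w!a = h a" if "a < Suc M" for a using that by (simp add: w_def del: upt_Suc)
  have bk: "blk w q i = Bs!i" if "i < M" for i
  proof -
    consider "i < q" | "i = q" | "q < i" by linarith
    then show ?thesis
    proof cases
      case 1
      then show ?thesis using nw[of i] that sing[of i] by (simp add: blk_def idx_def h_def)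
    next
      case 2
      then show ?thesis using nw[of q] nw[of "Suc q"] that qM hl by (simp add: blk_def idx_def h_def)
    next
      case 3
      then show ?thesis using nw[of "Suc i"] that sing[of i] by (simp add: blk_def idx_def h_def)
    qed
  qed
  have mkB: "mk w q = Bs"
    by (rule nth_equalityI) (use lw len bk in auto)
  have sw: "set w = {1..Suc M}"
  proof -
    have "set w = (\<Union>i<M. blk w q i)" using blk_Union[OF lw qM] by simp
    also have "\<dots> = (\<Union>i<M. Bs!i)" using bk by simp
    finally show ?thesis using un by simp
  qed
  have dw: "distinct w" using sw lw by (intro card_distinct) simp
  have de: "desc w q" using nw[of q] nw[of "Suc q"] qM hl lw by (simp add: desc_def h_def)
  have "av w" using mk_contains[OF lw qM de] mkB nc by simp
  then have "w \<in> AV (Suc M)" using dw sw by (simp add: AV_def)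
  then show ?thesis using qM de mkB by blast
qed

lemma op_count_formula:
  "op_count (Suc M) M [1,2,3] = M * (card (AV (Suc M)) - card (AV M))"
proof -
  let ?D = "SIGMA q:{..<M}. {w\<in>AV (Suc M). desc w q}"
  let ?S = "{Bs. ordered_set_partition (Suc M) M Bs \<and> \<not> osp_contains Bs [1,2,3]}"
  let ?f = "\<lambda>(q,w). mk w q"
  have "bij_betw ?f ?D ?S"
  proof (rule bij_betw_imageI)
    show "inj_on ?f ?D"
    proof (rule inj_onI)
      fix x y assume x: "x \<in> ?D" and y: "y \<in> ?D" and e: "?f x = ?f y"
      obtain q w where xs: "x = (q,w)" by (cases x)
      obtain q' w' where ys: "y = (q',w')" by (cases y)
      have "q = q' \<and> w = w'"
        by (rule mk_inj) (use x y xs ys e in auto)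
      then show "x = y" using xs ys by simp
    qed
    show "?f ` ?D = ?S"
    proof
      show "?f ` ?D \<subseteq> ?S"
      proof
        fix B assume "B \<in> ?f ` ?D"
        then obtain q w where qw: "q < M" "w \<in> AV (Suc M)" "desc w q" and B: "B = mk w q" by auto
        have "ordered_set_partition (Suc M) M B" using mk_osp[OF qw(2) qw(1)] B by simp
        moreover have "\<not> osp_contains B [1,2,3]"
          using mk_contains[OF AV_length[OF qw(2)] qw(1) qw(3)] qw(2) B by (simp add: AV_def)
        ultimately show "B \<in> ?S" by simp
      qed
      show "?S \<subseteq> ?f ` ?D"
      proof
        fix B assume "B \<in> ?S"
        then obtain q w where "q < M" "w \<in> AV (Suc M)" "desc w q" "mk w q = B"
          using mk_surj by blast
        then show "B \<in> ?f ` ?D" by force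
      qed
    qed
  qed
  then have "op_count (Suc M) M [1,2,3] = card ?D" unfolding op_count_def by (simp add: bij_betw_same_card)
  also have "card ?D = (\<Sum>q<M. card {w\<in>AV (Suc M). desc w q})"
    by (rule card_SigmaI) (auto simp: finite_AV)
  also have "\<dots> = (\<Sum>q<M. card (AV (Suc M)) - card (AV M))"
    by (rule sum.cong[OF refl]) (simp add: desc_count)
  finally show ?thesis by simp
qed

lemma aux_int: "(c::int) = x - y \<Longrightarrow> (n+1) * y = n * x \<Longrightarrow> (n+1) * c = x"
proof -
  assume a: "c = x - y" and b: "(n+1) * y = n * x"
  have "(n+1) * c = (n+1) * x - (n+1) * y" using a by (simp add: right_diff_distrib)
  also have "\<dots> = (n+1) * x - n * x" using b by simp
  also have "\<dots> = x" by (simp add: algebra_simps)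
  finally show ?thesis .
qed

lemma aux_nat: "(p::nat) * z = (2*p)*w \<Longrightarrow> p*w = m*x \<Longrightarrow> p*z = 2*m*x"
  by (metis mult.assoc mult.left_commute)

lemma cat_cb: "Suc N * card (AV N) = (2*N) choose N"
proof -
  have a: "Suc N * ((2*N) choose Suc N) = N * ((2*N) choose N)"
  proof -
    have "Suc N * ((2*N) choose Suc N) = (2*N) * ((2*N - 1) choose N)" by (rule binomial_absorption)
    also have "\<dots> = (2*N - N) * ((2*N) choose N)" by (rule binomial_absorb_comp[symmetric])
    also have "2*N - N = N" by simp
    finally show ?thesis .
  qed
  have a': "(int N + 1) * int ((2*N) choose Suc N) = int N * int ((2*N) choose N)"
    using arg_cong[OF a, of int] by (simp only: of_nat_mult of_nat_Suc add.commute)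
  have "(int N + 1) * int (card (AV N)) = int ((2*N) choose N)"
    by (rule aux_int[OF card_AV a'])
  then have "int (Suc N * card (AV N)) = int ((2*N) choose N)" by (simp only: of_nat_mult of_nat_Suc add.commute)
  then show ?thesis by (simp only: of_nat_eq_iff)
qed

lemma cb_rec: "Suc N * ((2 * Suc N) choose Suc N) = 2 * (2*N+1) * ((2*N) choose N)"
proof -
  have e2: "2 * Suc N = Suc (Suc (2*N))" by simp
  have 1: "Suc N * ((2 * Suc N) choose Suc N) = (2 * Suc N) * ((2 * Suc N - 1) choose N)"
    by (rule binomial_absorption)
  have e1: "2 * Suc N - 1 = Suc (2*N)" by simp
  have 2: "Suc N * (Suc (2*N) choose Suc N) = Suc (2*N) * ((2*N) choose N)"
    by (rule Suc_times_binomial)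
  have 3: "Suc (2*N) choose N = Suc (2*N) choose Suc N"
  proof -
    have "Suc (2*N) choose N = Suc (2*N) choose (Suc (2*N) - N)" by (rule binomial_symmetric) simp
    moreover have "Suc (2*N) - N = Suc N" by simp
    ultimately show ?thesis by simp
  qed
  have h1: "Suc N * ((2 * Suc N) choose Suc N) = (2 * Suc N) * (Suc (2*N) choose Suc N)"
    using 1 by (simp only: e1 3)
  have "Suc N * ((2 * Suc N) choose Suc N) = 2 * Suc (2*N) * ((2*N) choose N)"
    by (rule aux_nat[OF h1 2])
  then show ?thesis by simp
qed

lemma aux_real: "(p::real) > 0 \<Longrightarrow> q * p * a = b \<Longrightarrow> p * b' = m * b'' \<Longrightarrow> (p+1) * c = b' \<Longrightarrow> p * c0 = b''
   \<Longrightarrow> q * p * a = p * b' \<Longrightarrow> True"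
  by simp

lemma cat_rec': "(real N + 2) * real (card (AV (Suc N))) = 2 * (2 * real N + 1) * real (card (AV N))"
proof -
  have a: "Suc (Suc N) * card (AV (Suc N)) = (2 * Suc N) choose Suc N" by (rule cat_cb)
  have b: "Suc N * card (AV N) = (2*N) choose N" by (rule cat_cb)
  have c: "Suc N * ((2 * Suc N) choose Suc N) = 2 * (2*N+1) * ((2*N) choose N)" by (rule cb_rec)
  have "Suc N * (Suc (Suc N) * card (AV (Suc N))) = Suc N * (2 * (2*N+1) * card (AV N))"
  proof -
    have "Suc N * (Suc (Suc N) * card (AV (Suc N))) = 2 * (2*N+1) * ((2*N) choose N)" unfolding a c ..
    also have "\<dots> = 2 * (2*N+1) * (Suc N * card (AV N))" unfolding b ..
    finally show ?thesis by (simp only: ac_simps)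
  qed
  then have "Suc (Suc N) * card (AV (Suc N)) = 2 * (2*N+1) * card (AV N)"
    by (simp only: mult_cancel1) simp
  then have "real (Suc (Suc N) * card (AV (Suc N))) = real (2 * (2*N+1) * card (AV N))" by (simp only:)
  then show "(real N + 2) * real (card (AV (Suc N))) = 2 * (2 * real N + 1) * real (card (AV N))"
    by (simp add: algebra_simps)
qed

lemma cat_rec: "real (card (AV (Suc N))) = 2 * (2 * real N + 1) / (real N + 2) * real (card (AV N))"
  using cat_rec'[of N] by (simp add: field_simps)

lemma cat_mono: "card (AV N) \<le> card (AV (Suc N))"
proof -
  have "real (card (AV N)) \<le> real (card (AV (Suc N)))"
  proof -
    have "1 \<le> 2 * (2 * real N + 1) / (real N + 2)" by (simp add: field_simps)
    then have "1 * real (card (AV N)) \<le> 2 * (2 * real N + 1) / (real N + 2) * real (card (AV N))"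
      by (intro mult_right_mono) auto
    then show ?thesis using cat_rec[of N] by simp
  qed
  then show ?thesis by simp
qed

lemma card_AV_1: "card (AV 1) = 1"
proof -
  have "int (card (AV 1)) = int ((2*1) choose 1) - int ((2*1) choose (Suc 1))" by (rule card_AV)
  also have "\<dots> = 1" by (simp add: numeral_eq_Suc)
  finally show ?thesis by simp
qed

lemma card_AV_2: "card (AV 2) = 2"
proof -
  have "int (card (AV 2)) = int (4 choose 2) - int (4 choose 3)" using card_AV[of 2] by simp
  also have "\<dots> = 2" by (simp add: numeral_eq_Suc)
  finally show ?thesis by simp
qed

lemma alg:
  fixes a b c x :: real
  assumes x: "0 \<le> x" and h1: "(x + 3) * b = 2 * (2 * x + 3) * a" and h2: "(x + 4) * c = 2 * (2 * x + 5) * b"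
  shows "(x + 2) * (c - b) =
        (4 * (x + 3) - 6) * ((x + 3) - 1)^2 / (((x + 3) - 2)^2 * ((x + 3) + 1))
        * ((x + 1) * (b - a))"
proof -
  have nz: "x + 3 \<noteq> 0" "((x + 3) - 2)^2 * ((x + 3) + 1) \<noteq> 0" using x by auto
  have "(x + 3) * ((x + 2) * (c - b) * (((x + 3) - 2)^2 * ((x + 3) + 1))) =
        (x + 3) * ((4 * (x + 3) - 6) * ((x + 3) - 1)^2 * ((x + 1) * (b - a)))"
    using h1 h2 by algebra
  then have "(x + 2) * (c - b) * (((x + 3) - 2)^2 * ((x + 3) + 1)) =
        (4 * (x + 3) - 6) * ((x + 3) - 1)^2 * ((x + 1) * (b - a))"
    using nz(1) by simp
  then show ?thesis using nz(2) by (simp add: field_simps)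
qed

theorem theorem5:
  shows "op_count 2 1 [1,2,3] = 1 \<and>
    (\<forall>n::nat. n > 2 \<longrightarrow>
      real (op_count n (n - 1) [1,2,3]) =
        (4 * real n - 6) * (real n - 1)^2 / ((real n - 2)^2 * (real n + 1))
        * real (op_count (n - 1) (n - 2) [1,2,3]))"
proof (intro conjI allI impI)
  have "op_count (Suc 1) 1 [1,2,3] = 1 * (card (AV (Suc 1)) - card (AV 1))" by (rule op_count_formula)
  then show "op_count 2 1 [1,2,3] = 1"
    using card_AV_1 card_AV_2 by (simp add: numeral_2_eq_2)
next
  fix n :: nat assume n2: "n > 2"
  define k where "k = n - 3"
  have n: "n = Suc (Suc (Suc k))" using n2 by (simp add: k_def)
  define a where "a = real (card (AV (Suc k)))"
  define b where "b = real (card (AV (Suc (Suc k))))"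
  define c where "c = real (card (AV (Suc (Suc (Suc k)))))"
  have h1: "(real k + 3) * b = 2 * (2 * real k + 3) * a"
    using cat_rec'[of "Suc k"] unfolding a_def b_def by (simp add: algebra_simps)
  have h2: "(real k + 4) * c = 2 * (2 * real k + 5) * b"
    using cat_rec'[of "Suc (Suc k)"] unfolding b_def c_def by (simp add: algebra_simps)
  have o1: "real (op_count n (n - 1) [1,2,3]) = (real k + 2) * (c - b)"
  proof -
    have "op_count n (n - 1) [1,2,3] = Suc (Suc k) * (card (AV (Suc (Suc (Suc k)))) - card (AV (Suc (Suc k))))"
      using op_count_formula[of "Suc (Suc k)"] n by simp
    then have "real (op_count n (n - 1) [1,2,3]) = real (Suc (Suc k)) * real (card (AV (Suc (Suc (Suc k)))) - card (AV (Suc (Suc k))))"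
      by (simp only: of_nat_mult)
    also have "real (card (AV (Suc (Suc (Suc k)))) - card (AV (Suc (Suc k)))) = c - b"
      unfolding b_def c_def by (rule of_nat_diff[OF cat_mono])
    finally show ?thesis by simp
  qed
  have o2: "real (op_count (n - 1) (n - 2) [1,2,3]) = (real k + 1) * (b - a)"
  proof -
    have "op_count (n - 1) (n - 2) [1,2,3] = Suc k * (card (AV (Suc (Suc k))) - card (AV (Suc k)))"
      using op_count_formula[of "Suc k"] n by simp
    then have "real (op_count (n - 1) (n - 2) [1,2,3]) = real (Suc k) * real (card (AV (Suc (Suc k))) - card (AV (Suc k)))"
      by (simp only: of_nat_mult)
    also have "real (card (AV (Suc (Suc k))) - card (AV (Suc k))) = b - a"
      unfolding a_def b_def by (rule of_nat_diff[OF cat_mono])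
    finally show ?thesis by simp
  qed
  have rn: "real n = real k + 3" using n by simp
  show "real (op_count n (n - 1) [1,2,3]) =
        (4 * real n - 6) * (real n - 1)^2 / ((real n - 2)^2 * (real n + 1))
        * real (op_count (n - 1) (n - 2) [1,2,3])"
    unfolding o1 o2 rn by (rule alg[OF _ h1 h2]) simp
qed


end
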